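(* Let $T\subset\mathbb{R}^d$ be compact (with positive Lebesgue measure) and let $C:T\times T\to\mathbb{R}$ be a symmetric positive semidefinite kernel that is $\alpha$-Hölder continuous in each coordinate: there exist $M_C>0$ and $\alpha\in(0,1]$ with $|C(t_1,s)-C(t_2,s)|\le M_C|t_1-t_2|^{\alpha}$ for all $t_1,t_2,s\in T$. Let $\{(\lambda_j,\phi_j)\}$ be the eigenpairs of the integral operator of $C$ on $L^2(T)$ (so $C(s,t)=\sum_j\lambda_j\phi_j(s)\phi_j(t)$ with continuous $\phi_j$), and let $Z(t)=\sum_j\sqrt{\lambda_j}Z_j\phi_j(t)$, $t\in T$ (series converging in $L^2(\Omega)$ for each $t$), with $Z_j$ i.i.d. Laplace of mean $0$ and variance $1$; this is an ICLP with covariance function $C$. Then there exists a process $\tilde Z:T\times\Omega\to\mathbb{R}$ such that (1) for every $\omega\in\Omega$, $t\mapsto\tilde Z_\omega(t)$ is continuous on $T$, and (2) for every $t\in T$, $P(\tilde Z(t)=Z(t))=1$.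
   Context: The Laplace distribution with mean 0 and variance 1 has density $\frac1{\sqrt2}e^{-\sqrt2|x|}$. *)

theory Defs
  imports "HOL-Probability.Probability"
begin

definition psd_kernel :: "'a set \<Rightarrow> ('a \<Rightarrow> 'a \<Rightarrow> real) \<Rightarrow> bool" where
  "psd_kernel T C \<longleftrightarrow>
     (\<forall>(n::nat) (x::nat \<Rightarrow> 'a) (c::nat \<Rightarrow> real). (\<forall>i<n. x i \<in> T) \<longrightarrow>
        0 \<le> (\<Sum>i<n. \<Sum>j<n. c i * c j * C (x i) (x j)))"

definition laplace_density :: "real \<Rightarrow> real" where
  "laplace_density x = exp (- sqrt 2 * \<bar>x\<bar>) / sqrt 2"

end

theory Submission
  imports Defs
begin


lemma exp_half_line:
  fixes c :: real assumes c: "c > 0"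
  shows "(\<integral>\<^sup>+x. ennreal (exp (- c * x)) * indicator {0..} x \<partial>lborel) = ennreal (1 / c)"
proof -
  have "1 = (\<integral>\<^sup>+x. ennreal (x^0 * exp (-x)) * indicator {0 ..} x \<partial>lborel)"
    using nn_intergal_power_times_exp_Ici[of 0] by simp
  also have "\<dots> = ennreal \<bar>c\<bar> * (\<integral>\<^sup>+x. ennreal ((0 + c*x)^0 * exp (-(0 + c*x))) * indicator {0 ..} (0 + c*x) \<partial>lborel)"
    by (rule nn_integral_real_affine) (use c in auto)
  also have "(\<lambda>x. ennreal ((0 + c*x)^0 * exp (-(0 + c*x))) * indicator {0 ..} (0 + c*x))
        = (\<lambda>x. ennreal (exp (- c * x)) * indicator {0..} x)"
    using c by (auto simp: fun_eq_iff indicator_def zero_le_mult_iff)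
  finally have "1 = ennreal c * (\<integral>\<^sup>+x. ennreal (exp (- c * x)) * indicator {0..} x \<partial>lborel)"
    using c by simp
  then have "ennreal (1/c) * 1 = (ennreal (1/c) * ennreal c) * (\<integral>\<^sup>+x. ennreal (exp (- c * x)) * indicator {0..} x \<partial>lborel)"
    by (simp add: mult.assoc)
  also have "ennreal (1/c) * ennreal c = 1"
    using c by (simp flip: ennreal_mult)
  finally show ?thesis by simp
qed

lemma laplace_mgf_le:
  fixes v :: real assumes v: "\<bar>v\<bar> \<le> 1"
  shows "(\<integral>\<^sup>+x. ennreal (laplace_density x) * ennreal (exp (v * x)) \<partial>lborel) \<le> ennreal (exp (v\<^sup>2))"
proof -
  define r where "r = sqrt (2::real)"
  have r1: "r > 1" unfolding r_def by (simp add: real_less_rsqrt)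
  have rr: "r * r = 2" unfolding r_def by simp
  have vr: "v < r" "-v < r" using v r1 by auto
  define f where "f x = ennreal (exp (- r * \<bar>x\<bar> + v * x) / r)" for x
  have feq: "ennreal (laplace_density x) * ennreal (exp (v * x)) = f x" for x
    unfolding f_def laplace_density_def r_def
    by (simp add: ennreal_mult'' [symmetric] mult_exp_exp field_simps)
  have [measurable]: "f \<in> borel_measurable borel" unfolding f_def by measurable
  have "(\<integral>\<^sup>+x. ennreal (laplace_density x) * ennreal (exp (v * x)) \<partial>lborel) = (\<integral>\<^sup>+x. f x \<partial>lborel)"
    by (simp add: feq)
  also have "\<dots> \<le> (\<integral>\<^sup>+x. f x * indicator {0..} x + f x * indicator {..0} x \<partial>lborel)"
    by (intro nn_integral_mono) (auto simp: indicator_def)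
  also have "\<dots> = (\<integral>\<^sup>+x. f x * indicator {0..} x \<partial>lborel) + (\<integral>\<^sup>+x. f x * indicator {..0} x \<partial>lborel)"
    by (intro nn_integral_add) auto
  also have "(\<integral>\<^sup>+x. f x * indicator {0..} x \<partial>lborel) = (\<integral>\<^sup>+x. ennreal (1/r) * (ennreal (exp (- (r - v) * x)) * indicator {0..} x) \<partial>lborel)"
    using r1 by (intro nn_integral_cong) (auto simp: f_def indicator_def ennreal_mult'' [symmetric] algebra_simps)
  also have "\<dots> = ennreal (1/r) * (\<integral>\<^sup>+x. ennreal (exp (- (r - v) * x)) * indicator {0..} x \<partial>lborel)"
    by (rule nn_integral_cmult) auto
  also have "\<dots> = ennreal (1/r) * ennreal (1 / (r - v))"
    by (subst exp_half_line) (use vr in auto)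
  also have "(\<integral>\<^sup>+x. f x * indicator {..0} x \<partial>lborel) = ennreal \<bar>-1\<bar> * (\<integral>\<^sup>+x. f (0 + (-1) * x) * indicator {..0} (0 + (-1) * x) \<partial>lborel)"
    by (rule nn_integral_real_affine) auto
  also have "\<dots> = (\<integral>\<^sup>+x. f (0 + (-1) * x) * indicator {..0} (0 + (-1) * x) \<partial>lborel)"
    by simp
  also have "\<dots> = (\<integral>\<^sup>+x. ennreal (1/r) * (ennreal (exp (- (r + v) * x)) * indicator {0..} x) \<partial>lborel)"
    using r1 by (intro nn_integral_cong) (auto simp: f_def indicator_def ennreal_mult'' [symmetric] algebra_simps)
  also have "\<dots> = ennreal (1/r) * (\<integral>\<^sup>+x. ennreal (exp (- (r + v) * x)) * indicator {0..} x \<partial>lborel)"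
    by (rule nn_integral_cmult) auto
  also have "\<dots> = ennreal (1/r) * ennreal (1 / (r + v))"
    by (subst exp_half_line) (use vr in auto)
  also have "ennreal (1/r) * ennreal (1 / (r - v)) + ennreal (1/r) * ennreal (1 / (r + v)) = ennreal (2 / (2 - v\<^sup>2))"
  proof -
    have "1/r * (1/(r-v)) + 1/r * (1/(r+v)) = 2 / (2 - v\<^sup>2)"
    proof -
      have d1: "r * v < 2" using vr r1 rr by (metis mult_strict_left_mono order.strict_trans zero_less_one)
      have d2: "- (r * v) < 2" using vr r1 rr by (metis minus_mult_right mult_strict_left_mono order.strict_trans zero_less_one)
      have pr: "(2 - r * v) * (r * v + 2) = 2 * (2 - v * v)" using rr by (simp add: algebra_simps)
      have v2: "v * v < 2" using pr d1 d2 by (smt (verit) mult_pos_pos)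
      show ?thesis
      proof -
        have rrvv: "r * (r * (v * v)) = 2 * (v * v)" using rr by (metis mult.assoc)
        show ?thesis using vr r1 rr d1 d2 v2
          by (simp add: field_simps power2_eq_square rrvv)
      qed
    qed
    then show ?thesis using vr r1
      by (simp add: ennreal_plus [symmetric] ennreal_mult'' [symmetric] del: ennreal_plus)
  qed
  also have "\<dots> \<le> ennreal (exp (v\<^sup>2))"
  proof (rule ennreal_leI)
    have y: "v\<^sup>2 \<le> 1" using v by (metis abs_le_square_iff abs_one one_power2)
    have "2 \<le> (2 - v\<^sup>2) * (1 + v\<^sup>2)" proof -
      have "0 \<le> v\<^sup>2 * (1 - v\<^sup>2)" using y by (intro mult_nonneg_nonneg) auto
      then show ?thesis by (simp add: algebra_simps)
    qed
    also have "\<dots> \<le> (2 - v\<^sup>2) * exp (v\<^sup>2)" using y by (intro mult_left_mono) (auto simp: exp_ge_add_one_self)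
    finally show "2 / (2 - v\<^sup>2) \<le> exp (v\<^sup>2)" using y by (simp add: divide_le_eq mult.commute)
  qed
  finally show ?thesis .
qed


context prob_space begin

lemma laplace_sum_tail_ge:
  assumes indep: "indep_vars (\<lambda>_. borel) Zs UNIV"
    and lap: "\<forall>j. distributed M lborel (Zs j) (\<lambda>x. ennreal (laplace_density x))"
    and l: "l > 0" and a: "\<forall>j\<in>I. l * \<bar>a j\<bar> \<le> 1" and fin: "finite I"
  shows "emeasure M {\<omega>\<in>space M. x \<le> (\<Sum>j\<in>I. a j * Zs j \<omega>)}
           \<le> ennreal (exp (- l * x + l\<^sup>2 * (\<Sum>j\<in>I. (a j)\<^sup>2)))"
proof -
  have rv[measurable]: "Zs j \<in> borel_measurable M" for j
    using indep unfolding indep_vars_def by auto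
  have "emeasure M {\<omega>\<in>space M. x \<le> (\<Sum>j\<in>I. a j * Zs j \<omega>)}
     \<le> ennreal (exp (-l * x)) * (\<integral>\<^sup>+\<omega>. ennreal (exp (l * (\<Sum>j\<in>I. a j * Zs j \<omega>))) * indicator (space M) \<omega> \<partial>M)"
    by (intro Chernoff_ineq_nn_integral_ge l) auto
  also have "(\<integral>\<^sup>+\<omega>. ennreal (exp (l * (\<Sum>j\<in>I. a j * Zs j \<omega>))) * indicator (space M) \<omega> \<partial>M)
      = (\<integral>\<^sup>+\<omega>. (\<Prod>j\<in>I. ennreal (exp (l * a j * Zs j \<omega>))) \<partial>M)"
    by (intro nn_integral_cong)
       (simp add: sum_distrib_left exp_sum fin prod_ennreal mult.assoc)
  also have "\<dots> = (\<Prod>j\<in>I. \<integral>\<^sup>+\<omega>. ennreal (exp (l * a j * Zs j \<omega>)) \<partial>M)"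
    by (intro indep_vars_nn_integral fin indep_vars_compose2[OF indep_vars_subset[OF indep]]) auto
  also have "ennreal (exp (-l * x)) * \<dots> \<le> ennreal (exp (-l * x)) * (\<Prod>j\<in>I. ennreal (exp ((l * a j)\<^sup>2)))"
  proof (intro mult_left_mono prod_mono_ennreal)
    fix j assume j: "j \<in> I"
    have "(\<integral>\<^sup>+\<omega>. ennreal (exp (l * a j * Zs j \<omega>)) \<partial>M)
        = (\<integral>\<^sup>+y. ennreal (laplace_density y) * ennreal (exp ((l * a j) * y)) \<partial>lborel)"
      by (rule distributed_nn_integral[symmetric, OF lap[rule_format, of j]]) auto
    also have "\<dots> \<le> ennreal (exp ((l * a j)\<^sup>2))"
      by (rule laplace_mgf_le) (use a j l in \<open>auto simp: abs_mult\<close>)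
    finally show "(\<integral>\<^sup>+\<omega>. ennreal (exp (l * a j * Zs j \<omega>)) \<partial>M) \<le> ennreal (exp ((l * a j)\<^sup>2))" .
  qed auto
  also have "ennreal (exp (-l * x)) * (\<Prod>j\<in>I. ennreal (exp ((l * a j)\<^sup>2)))
     = ennreal (exp (-l * x) * (\<Prod>j\<in>I. exp ((l * a j)\<^sup>2)))"
    by (simp add: prod_ennreal ennreal_mult prod_nonneg)
  also have "exp (-l * x) * (\<Prod>j\<in>I. exp ((l * a j)\<^sup>2)) = exp (- l * x + l\<^sup>2 * (\<Sum>j\<in>I. (a j)\<^sup>2))"
    by (subst exp_add, subst sum_distrib_left, subst exp_sum[OF fin]) (simp add: power_mult_distrib)
  finally show ?thesis .
qed

end


context prob_space begin

lemma laplace_limit_tail: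
  assumes indep: "indep_vars (\<lambda>_. borel) Zs UNIV"
    and lap: "\<forall>j. distributed M lborel (Zs j) (\<lambda>x. ennreal (laplace_density x))"
    and X_meas[measurable]: "X \<in> borel_measurable M"
    and L2: "(\<lambda>n. \<integral>\<^sup>+\<omega>. ennreal ((X \<omega> - (\<Sum>j<n. a j * Zs j \<omega>))\<^sup>2) \<partial>M) \<longlonglongrightarrow> 0"
    and s: "\<And>n. (\<Sum>j<n. (a j)\<^sup>2) \<le> s" and l: "l > 0" "l\<^sup>2 * s \<le> 1"
  shows "prob {\<omega>\<in>space M. x \<le> \<bar>X \<omega>\<bar>} \<le> 2 * exp 2 * exp (- l * x)"
proof -
  have rv[measurable]: "Zs j \<in> borel_measurable M" for j
    using indep unfolding indep_vars_def by auto
  define S where "S n \<omega> = (\<Sum>j<n. a j * Zs j \<omega>)" for n \<omega>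
  have S_meas[measurable]: "S n \<in> borel_measurable M" for n unfolding S_def by measurable
  have la: "l * \<bar>a j\<bar> \<le> 1" for j
  proof -
    have "(a j)\<^sup>2 \<le> (\<Sum>i<Suc j. (a i)\<^sup>2)" by (rule member_le_sum) auto
    also have "\<dots> \<le> s" by (rule s)
    finally have "(a j)\<^sup>2 \<le> s" .
    then have "l\<^sup>2 * (a j)\<^sup>2 \<le> l\<^sup>2 * s" by (intro mult_left_mono) auto
    then have "(l * a j)\<^sup>2 \<le> 1\<^sup>2" using l(2) by (simp only: power_mult_distrib one_power2)
    then have "\<bar>l * a j\<bar> \<le> \<bar>1\<bar>" unfolding abs_le_square_iff .
    then show ?thesis using l by (simp add: abs_mult)
  qed
  have main: "prob {\<omega>\<in>space M. x \<le> \<bar>X \<omega>\<bar>} \<le> 2 * exp 2 * exp (- l * x) + \<delta>" if \<delta>: "\<delta> > 0" "\<delta> \<le> 1 / l" for \<delta>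
  proof -
    have "eventually (\<lambda>n. (\<integral>\<^sup>+\<omega>. ennreal ((X \<omega> - S n \<omega>)\<^sup>2) \<partial>M) < ennreal (\<delta>^3)) sequentially"
      using order_tendstoD(2)[OF L2, of "ennreal (\<delta>^3)"] \<delta> unfolding S_def by simp
    then obtain n where n: "(\<integral>\<^sup>+\<omega>. ennreal ((X \<omega> - S n \<omega>)\<^sup>2) \<partial>M) < ennreal (\<delta>^3)"
      by (auto simp: eventually_sequentially)
    define B1 where "B1 = {\<omega>\<in>space M. x - \<delta> \<le> (\<Sum>j<n. a j * Zs j \<omega>)}"
    define B2 where "B2 = {\<omega>\<in>space M. x - \<delta> \<le> (\<Sum>j<n. (- a j) * Zs j \<omega>)}"
    define B3 where "B3 = {\<omega>\<in>space M. 1 \<le> ennreal (1 / \<delta>\<^sup>2) * ennreal ((X \<omega> - S n \<omega>)\<^sup>2)}"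
    have [measurable]: "B1 \<in> sets M" "B2 \<in> sets M" "B3 \<in> sets M"
      unfolding B1_def B2_def B3_def by measurable
    have sub: "{\<omega>\<in>space M. x \<le> \<bar>X \<omega>\<bar>} \<subseteq> B1 \<union> B2 \<union> B3"
    proof
      fix \<omega> assume \<omega>: "\<omega> \<in> {\<omega>\<in>space M. x \<le> \<bar>X \<omega>\<bar>}"
      show "\<omega> \<in> B1 \<union> B2 \<union> B3"
      proof (cases "\<delta> \<le> \<bar>X \<omega> - S n \<omega>\<bar>")
        case True
        then have "\<delta>\<^sup>2 \<le> (X \<omega> - S n \<omega>)\<^sup>2"
          using power_mono[OF True, of 2] \<delta> by simp
        then have "1 \<le> (1 / \<delta>\<^sup>2) * (X \<omega> - S n \<omega>)\<^sup>2" using \<delta> by (simp add: field_simps)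
        then have "1 \<le> ennreal (1 / \<delta>\<^sup>2) * ennreal ((X \<omega> - S n \<omega>)\<^sup>2)"
          by (simp flip: ennreal_mult)
        then show ?thesis using \<omega> by (auto simp: B3_def)
      next
        case False
        then have "x - \<delta> \<le> S n \<omega> \<or> x - \<delta> \<le> - S n \<omega>" using \<omega> by auto
        moreover have "- S n \<omega> = (\<Sum>j<n. (- a j) * Zs j \<omega>)"
          unfolding S_def by (simp add: sum_negf[symmetric])
        ultimately show ?thesis using \<omega> by (auto simp: B1_def B2_def S_def)
      qed
    qed
    have e1: "emeasure M B1 \<le> ennreal (exp 2 * exp (- l * x))"
    proof -
      have "emeasure M B1 \<le> ennreal (exp (- l * (x - \<delta>) + l\<^sup>2 * (\<Sum>j<n. (a j)\<^sup>2)))"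
        unfolding B1_def by (rule laplace_sum_tail_ge[OF indep lap l(1)]) (use la in auto)
      also have "\<dots> \<le> ennreal (exp 2 * exp (- l * x))"
      proof (rule ennreal_leI)
        have "l\<^sup>2 * (\<Sum>j<n. (a j)\<^sup>2) \<le> l\<^sup>2 * s" by (intro mult_left_mono s) auto
        moreover have "l * \<delta> \<le> 1" using \<delta> l by (simp add: field_simps)
        moreover have "- l * (x - \<delta>) = - l * x + l * \<delta>" by (simp add: algebra_simps)
        moreover have "l\<^sup>2 * (\<Sum>j<n. (- a j)\<^sup>2) = l\<^sup>2 * (\<Sum>j<n. (a j)\<^sup>2)" by simp
        ultimately have "- l * (x - \<delta>) + l\<^sup>2 * (\<Sum>j<n. (a j)\<^sup>2) \<le> 2 + - l * x"
          using l(2) by linarith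
        then show "exp (- l * (x - \<delta>) + l\<^sup>2 * (\<Sum>j<n. (a j)\<^sup>2)) \<le> exp 2 * exp (- l * x)"
          by (simp add: exp_add[symmetric])
      qed
      finally show ?thesis .
    qed
    have e2: "emeasure M B2 \<le> ennreal (exp 2 * exp (- l * x))"
    proof -
      have "emeasure M B2 \<le> ennreal (exp (- l * (x - \<delta>) + l\<^sup>2 * (\<Sum>j<n. (- a j)\<^sup>2)))"
        unfolding B2_def by (rule laplace_sum_tail_ge[OF indep lap l(1)]) (use la in auto)
      also have "\<dots> \<le> ennreal (exp 2 * exp (- l * x))"
      proof (rule ennreal_leI)
        have "l\<^sup>2 * (\<Sum>j<n. (a j)\<^sup>2) \<le> l\<^sup>2 * s" by (intro mult_left_mono s) auto
        moreover have "l * \<delta> \<le> 1" using \<delta> l by (simp add: field_simps)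
        moreover have "- l * (x - \<delta>) = - l * x + l * \<delta>" by (simp add: algebra_simps)
        moreover have "l\<^sup>2 * (\<Sum>j<n. (- a j)\<^sup>2) = l\<^sup>2 * (\<Sum>j<n. (a j)\<^sup>2)" by simp
        ultimately have "- l * (x - \<delta>) + l\<^sup>2 * (\<Sum>j<n. (- a j)\<^sup>2) \<le> 2 + - l * x"
          using l(2) by linarith
        then show "exp (- l * (x - \<delta>) + l\<^sup>2 * (\<Sum>j<n. (- a j)\<^sup>2)) \<le> exp 2 * exp (- l * x)"
          by (simp add: exp_add[symmetric])
      qed
      finally show ?thesis .
    qed
    have e3: "emeasure M B3 \<le> ennreal \<delta>"
    proof -
      have "emeasure M B3 \<le> ennreal (1 / \<delta>\<^sup>2) * (\<integral>\<^sup>+\<omega>. ennreal ((X \<omega> - S n \<omega>)\<^sup>2) * indicator (space M) \<omega> \<partial>M)"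
        unfolding B3_def by (rule nn_integral_Markov_inequality) auto
      also have "(\<integral>\<^sup>+\<omega>. ennreal ((X \<omega> - S n \<omega>)\<^sup>2) * indicator (space M) \<omega> \<partial>M) = (\<integral>\<^sup>+\<omega>. ennreal ((X \<omega> - S n \<omega>)\<^sup>2) \<partial>M)"
        by (intro nn_integral_cong) auto
      also have "ennreal (1 / \<delta>\<^sup>2) * \<dots> \<le> ennreal (1 / \<delta>\<^sup>2) * ennreal (\<delta>^3)"
        using n by (intro mult_left_mono) auto
      also have "\<dots> = ennreal \<delta>" using \<delta> by (simp flip: ennreal_mult add: power2_eq_square power3_eq_cube)
      finally show ?thesis .
    qed
    have "emeasure M {\<omega>\<in>space M. x \<le> \<bar>X \<omega>\<bar>} \<le> emeasure M (B1 \<union> B2 \<union> B3)"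
      by (intro emeasure_mono sub) auto
    also have "\<dots> \<le> emeasure M B1 + emeasure M B2 + emeasure M B3"
      by (intro order.trans[OF emeasure_subadditive] add_right_mono emeasure_subadditive) auto
    also have "\<dots> \<le> ennreal (exp 2 * exp (- l * x)) + ennreal (exp 2 * exp (- l * x)) + ennreal \<delta>"
      by (intro add_mono e1 e2 e3)
    also have "\<dots> = ennreal (2 * exp 2 * exp (- l * x) + \<delta>)"
      using \<delta> by (simp flip: ennreal_plus)
    finally have "ennreal (prob {\<omega>\<in>space M. x \<le> \<bar>X \<omega>\<bar>}) \<le> ennreal (2 * exp 2 * exp (- l * x) + \<delta>)"
      by (simp only: emeasure_eq_measure)
    then show ?thesis
      using \<delta> by (subst (asm) ennreal_le_iff) auto
  qed
  show ?thesis
  proof (rule field_le_epsilon)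
    fix e :: real assume e: "0 < e"
    have "prob {\<omega>\<in>space M. x \<le> \<bar>X \<omega>\<bar>} \<le> 2 * exp 2 * exp (- l * x) + min e (1/l)"
      using e l by (intro main) auto
    then show "prob {\<omega>\<in>space M. x \<le> \<bar>X \<omega>\<bar>} \<le> 2 * exp 2 * exp (- l * x) + e" by linarith
  qed
qed

end


locale iclp = prob_space M for M :: "'b measure" +
  fixes T :: "'a::euclidean_space set" and C :: "'a \<Rightarrow> 'a \<Rightarrow> real"
    and lam :: "nat \<Rightarrow> real" and \<phi> :: "nat \<Rightarrow> 'a \<Rightarrow> real"
    and Zs :: "nat \<Rightarrow> 'b \<Rightarrow> real" and Z :: "'a \<Rightarrow> 'b \<Rightarrow> real"
    and MC \<alpha> :: real
  assumes T_compact: "compact T" and T_ne: "T \<noteq> {}"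
    and C_sym: "\<forall>s\<in>T. \<forall>t\<in>T. C s t = C t s"
    and MC_pos: "MC > 0" and alpha: "0 < \<alpha>" "\<alpha> \<le> 1"
    and C_hoelder: "\<forall>t1\<in>T. \<forall>t2\<in>T. \<forall>s\<in>T. \<bar>C t1 s - C t2 s\<bar> \<le> MC * norm (t1 - t2) powr \<alpha>"
    and lam_nonneg: "\<forall>j. lam j \<ge> 0"
    and mercer: "\<forall>s\<in>T. \<forall>t\<in>T. (\<lambda>j. lam j * \<phi> j s * \<phi> j t) sums C s t"
    and indep: "indep_vars (\<lambda>_. borel) Zs UNIV"
    and lap: "\<forall>j. distributed M lborel (Zs j) (\<lambda>x. ennreal (laplace_density x))"
    and Z_meas: "\<forall>t\<in>T. Z t \<in> borel_measurable M"
    and Z_L2: "\<forall>t\<in>T. (\<lambda>n. \<integral>\<^sup>+ \<omega>. ennreal ((Z t \<omega> - (\<Sum>j<n. sqrt (lam j) * Zs j \<omega> * \<phi> j t))\<^sup>2) \<partial>M)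
                 \<longlonglongrightarrow> 0"
begin

lemma rv_Zs[measurable]: "Zs j \<in> borel_measurable M"
  using indep unfolding indep_vars_def by auto

lemma pair_tail:
  assumes u: "u \<in> T" and v: "v \<in> T" and l: "l > 0" "l\<^sup>2 * (2 * MC * norm (u - v) powr \<alpha>) \<le> 1"
  shows "prob {\<omega>\<in>space M. x \<le> \<bar>Z u \<omega> - Z v \<omega>\<bar>} \<le> 2 * exp 2 * exp (- l * x)"
proof (rule laplace_limit_tail[OF indep lap])
  define a where "a j = sqrt (lam j) * (\<phi> j u - \<phi> j v)" for j
  define s where "s = 2 * MC * norm (u - v) powr \<alpha>"
  have [measurable]: "Z u \<in> borel_measurable M" "Z v \<in> borel_measurable M" using Z_meas u v by auto
  show "(\<lambda>\<omega>. Z u \<omega> - Z v \<omega>) \<in> borel_measurable M" by measurable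
  have sq: "(\<lambda>j. (a j)\<^sup>2) sums (C u u - 2 * C u v + C v v)"
  proof -
    have "(\<lambda>j. lam j * \<phi> j u * \<phi> j u - 2 * (lam j * \<phi> j u * \<phi> j v) + lam j * \<phi> j v * \<phi> j v)
        sums (C u u - 2 * C u v + C v v)"
      using mercer u v by (intro sums_add sums_diff sums_mult) auto
    moreover have "(a j)\<^sup>2 = lam j * \<phi> j u * \<phi> j u - 2 * (lam j * \<phi> j u * \<phi> j v) + lam j * \<phi> j v * \<phi> j v" for j
    proof -
      have "(a j)\<^sup>2 = lam j * (\<phi> j u - \<phi> j v)\<^sup>2"
        using lam_nonneg unfolding a_def by (simp add: power_mult_distrib)
      then show ?thesis by (simp add: power2_eq_square algebra_simps)
    qed
    ultimately show ?thesis by simp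
  qed
  have Cb: "C u u - 2 * C u v + C v v \<le> s"
  proof -
    have "\<bar>C u u - C v u\<bar> \<le> MC * norm (u - v) powr \<alpha>" using C_hoelder u v by auto
    moreover have "\<bar>C v v - C u v\<bar> \<le> MC * norm (u - v) powr \<alpha>"
      using C_hoelder u v norm_minus_commute[of v u] by metis
    moreover have "C v u = C u v" using C_sym u v by auto
    moreover have "norm (v - u) = norm (u - v)" by (rule norm_minus_commute)
    ultimately have "C u u - 2 * C u v + C v v \<le> 2 * (MC * norm (u - v) powr \<alpha>)" by linarith
    then show ?thesis unfolding s_def by (simp add: mult.assoc)
  qed
  show "\<And>n. (\<Sum>j<n. (a j)\<^sup>2) \<le> s"
  proof -
    fix n
    have "(\<Sum>j<n. (a j)\<^sup>2) \<le> (\<Sum>j. (a j)\<^sup>2)"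
      using sq by (intro sum_le_suminf) (auto simp: sums_iff)
    also have "\<dots> = C u u - 2 * C u v + C v v" using sq by (simp add: sums_iff)
    finally show "(\<Sum>j<n. (a j)\<^sup>2) \<le> s" using Cb by linarith
  qed
  show "l > 0" "l\<^sup>2 * s \<le> 1" using l unfolding s_def by auto
  define Su where "Su n \<omega> = (\<Sum>j<n. sqrt (lam j) * Zs j \<omega> * \<phi> j u)" for n \<omega>
  define Sv where "Sv n \<omega> = (\<Sum>j<n. sqrt (lam j) * Zs j \<omega> * \<phi> j v)" for n \<omega>
  have Su: "(\<lambda>n. \<integral>\<^sup>+ \<omega>. ennreal ((Z u \<omega> - Su n \<omega>)\<^sup>2) \<partial>M) \<longlonglongrightarrow> 0"
    using Z_L2 u unfolding Su_def by auto
  have Sv: "(\<lambda>n. \<integral>\<^sup>+ \<omega>. ennreal ((Z v \<omega> - Sv n \<omega>)\<^sup>2) \<partial>M) \<longlonglongrightarrow> 0"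
    using Z_L2 v unfolding Sv_def by auto
  have [measurable]: "Su n \<in> borel_measurable M" "Sv n \<in> borel_measurable M" for n
    unfolding Su_def Sv_def by measurable
  have eqS: "(\<Sum>j<n. a j * Zs j \<omega>) = Su n \<omega> - Sv n \<omega>" for n \<omega>
    unfolding a_def Su_def Sv_def by (simp add: sum_subtractf[symmetric] algebra_simps)
  show "(\<lambda>n. \<integral>\<^sup>+\<omega>. ennreal ((Z u \<omega> - Z v \<omega> - (\<Sum>j<n. a j * Zs j \<omega>))\<^sup>2) \<partial>M) \<longlonglongrightarrow> 0"
  proof (rule tendsto_sandwich[of "\<lambda>_. 0"])
    show "\<forall>\<^sub>F n in sequentially. 0 \<le> (\<integral>\<^sup>+\<omega>. ennreal ((Z u \<omega> - Z v \<omega> - (\<Sum>j<n. a j * Zs j \<omega>))\<^sup>2) \<partial>M)"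
      by simp
    show "\<forall>\<^sub>F n in sequentially. (\<integral>\<^sup>+\<omega>. ennreal ((Z u \<omega> - Z v \<omega> - (\<Sum>j<n. a j * Zs j \<omega>))\<^sup>2) \<partial>M)
       \<le> 2 * (\<integral>\<^sup>+ \<omega>. ennreal ((Z u \<omega> - Su n \<omega>)\<^sup>2) \<partial>M) + 2 * (\<integral>\<^sup>+ \<omega>. ennreal ((Z v \<omega> - Sv n \<omega>)\<^sup>2) \<partial>M)"
    proof (intro always_eventually allI)
      fix n
      have "(\<integral>\<^sup>+\<omega>. ennreal ((Z u \<omega> - Z v \<omega> - (\<Sum>j<n. a j * Zs j \<omega>))\<^sup>2) \<partial>M)
         \<le> (\<integral>\<^sup>+\<omega>. 2 * ennreal ((Z u \<omega> - Su n \<omega>)\<^sup>2) + 2 * ennreal ((Z v \<omega> - Sv n \<omega>)\<^sup>2) \<partial>M)"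
      proof (intro nn_integral_mono)
        fix \<omega>
        define p where "p = Z u \<omega> - Su n \<omega>"
        define q where "q = Z v \<omega> - Sv n \<omega>"
        have "(Z u \<omega> - Z v \<omega> - (\<Sum>j<n. a j * Zs j \<omega>)) = p - q" unfolding p_def q_def eqS by simp
        moreover have "(p - q)\<^sup>2 \<le> 2 * p\<^sup>2 + 2 * q\<^sup>2"
          using zero_le_power2[of "p + q"] by (simp add: power2_eq_square algebra_simps)
        ultimately have "ennreal ((Z u \<omega> - Z v \<omega> - (\<Sum>j<n. a j * Zs j \<omega>))\<^sup>2) \<le> ennreal (2 * p\<^sup>2 + 2 * q\<^sup>2)"
          by (intro ennreal_leI) simp
        also have "\<dots> = 2 * ennreal (p\<^sup>2) + 2 * ennreal (q\<^sup>2)"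
          by (simp add: ennreal_plus ennreal_mult)
        finally show "ennreal ((Z u \<omega> - Z v \<omega> - (\<Sum>j<n. a j * Zs j \<omega>))\<^sup>2)
            \<le> 2 * ennreal ((Z u \<omega> - Su n \<omega>)\<^sup>2) + 2 * ennreal ((Z v \<omega> - Sv n \<omega>)\<^sup>2)"
          unfolding p_def q_def .
      qed
      also have "\<dots> = 2 * (\<integral>\<^sup>+ \<omega>. ennreal ((Z u \<omega> - Su n \<omega>)\<^sup>2) \<partial>M) + 2 * (\<integral>\<^sup>+ \<omega>. ennreal ((Z v \<omega> - Sv n \<omega>)\<^sup>2) \<partial>M)"
        by (simp add: nn_integral_add nn_integral_cmult)
      finally show "(\<integral>\<^sup>+\<omega>. ennreal ((Z u \<omega> - Z v \<omega> - (\<Sum>j<n. a j * Zs j \<omega>))\<^sup>2) \<partial>M)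
       \<le> 2 * (\<integral>\<^sup>+ \<omega>. ennreal ((Z u \<omega> - Su n \<omega>)\<^sup>2) \<partial>M) + 2 * (\<integral>\<^sup>+ \<omega>. ennreal ((Z v \<omega> - Sv n \<omega>)\<^sup>2) \<partial>M)" .
    qed
    show "(\<lambda>_. 0) \<longlonglongrightarrow> (0::ennreal)" by simp
    have "(\<lambda>n. 2 * (\<integral>\<^sup>+ \<omega>. ennreal ((Z u \<omega> - Su n \<omega>)\<^sup>2) \<partial>M) + 2 * (\<integral>\<^sup>+ \<omega>. ennreal ((Z v \<omega> - Sv n \<omega>)\<^sup>2) \<partial>M))
        \<longlonglongrightarrow> 2 * 0 + 2 * 0"
      by (intro tendsto_add tendsto_mult_ennreal tendsto_const Su Sv) auto
    then show "(\<lambda>n. 2 * (\<integral>\<^sup>+ \<omega>. ennreal ((Z u \<omega> - Su n \<omega>)\<^sup>2) \<partial>M) + 2 * (\<integral>\<^sup>+ \<omega>. ennreal ((Z v \<omega> - Sv n \<omega>)\<^sup>2) \<partial>M))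
        \<longlonglongrightarrow> 0" by simp
  qed
qed

end


lemma tail_limit:
  fixes Y :: "nat \<Rightarrow> real" and \<epsilon> :: "nat \<Rightarrow> real"
  assumes \<epsilon>: "summable \<epsilon>" "\<And>i. 0 \<le> \<epsilon> i"
    and step: "\<And>j. j \<ge> K \<Longrightarrow> \<bar>Y j - Y (Suc j)\<bar> \<le> \<epsilon> j"
  shows "convergent Y" "\<And>j. j \<ge> K \<Longrightarrow> \<bar>Y j - lim Y\<bar> \<le> (\<Sum>i. \<epsilon> (i + j))"
proof -
  have part: "\<bar>Y j - Y (m + j)\<bar> \<le> (\<Sum>i<m. \<epsilon> (i + j))" if "j \<ge> K" for j m
  proof (induction m)
    case 0 then show ?case by simp
  next
    case (Suc m)
    have "\<bar>Y (m + j) - Y (Suc (m + j))\<bar> \<le> \<epsilon> (m + j)" using step that by auto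
    with Suc show ?case by simp
  qed
  have tau: "\<bar>Y j - Y (m + j)\<bar> \<le> (\<Sum>i. \<epsilon> (i + j))" if "j \<ge> K" for j m
  proof -
    have "(\<Sum>i<m. \<epsilon> (i + j)) \<le> (\<Sum>i. \<epsilon> (i + j))"
      using \<epsilon> by (intro sum_le_suminf summable_ignore_initial_segment) auto
    then show ?thesis using part[OF that, of m] by linarith
  qed
  have t0: "(\<lambda>n. (\<Sum>i. \<epsilon> (i + n))) \<longlonglongrightarrow> 0" by (rule suminf_exist_split2[OF \<epsilon>(1)])
  show "convergent Y"
    unfolding Cauchy_convergent_iff[symmetric] Cauchy_altdef2
  proof (intro allI impI)
    fix e :: real assume e: "e > 0"
    obtain N0 where N0: "\<And>n. n \<ge> N0 \<Longrightarrow> \<bar>(\<Sum>i. \<epsilon> (i + n))\<bar> < e"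
      using LIMSEQ_D[OF t0 e] by auto
    define N where "N = max N0 K"
    have "\<forall>n\<ge>N. dist (Y n) (Y N) < e"
    proof (intro allI impI)
      fix n assume n: "n \<ge> N"
      have "\<bar>Y N - Y ((n - N) + N)\<bar> \<le> (\<Sum>i. \<epsilon> (i + N))" by (rule tau) (simp add: N_def)
      moreover have "\<bar>(\<Sum>i. \<epsilon> (i + N))\<bar> < e" by (rule N0) (simp add: N_def)
      ultimately show "dist (Y n) (Y N) < e" using n by (simp add: dist_real_def abs_minus_commute)
    qed
    then show "\<exists>N. \<forall>n\<ge>N. dist (Y n) (Y N) < e" by blast
  qed
  then have lim: "Y \<longlonglongrightarrow> lim Y" by (simp add: convergent_LIMSEQ_iff)
  show "\<bar>Y j - lim Y\<bar> \<le> (\<Sum>i. \<epsilon> (i + j))" if j: "j \<ge> K" for j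
  proof (rule LIMSEQ_le_const2)
    show "(\<lambda>m. \<bar>Y j - Y (m + j)\<bar>) \<longlonglongrightarrow> \<bar>Y j - lim Y\<bar>"
      by (intro tendsto_intros LIMSEQ_ignore_initial_segment lim)
    show "\<exists>N. \<forall>n\<ge>N. \<bar>Y j - Y (n + j)\<bar> \<le> (\<Sum>i. \<epsilon> (i + j))" using tau[OF j] by blast
  qed
qed

lemma unif_limit_cont:
  fixes Y :: "nat \<Rightarrow> 'a::metric_space \<Rightarrow> real"
  assumes \<epsilon>: "summable \<epsilon>" "\<And>i. 0 \<le> \<epsilon> i"
    and step: "\<And>j t. j \<ge> K \<Longrightarrow> t \<in> T \<Longrightarrow> \<bar>Y j t - Y (Suc j) t\<bar> \<le> \<epsilon> j"
    and near: "\<And>j t t'. j \<ge> K \<Longrightarrow> t \<in> T \<Longrightarrow> t' \<in> T \<Longrightarrow> dist t t' \<le> (1/2)^j \<Longrightarrow> \<bar>Y j t - Y j t'\<bar> \<le> \<epsilon> j"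
  shows "continuous_on T (\<lambda>t. lim (\<lambda>j. Y j t))"
proof -
  define \<tau> where "\<tau> j = (\<Sum>i. \<epsilon> (i + j))" for j
  have tl: "\<bar>Y j t - lim (\<lambda>j. Y j t)\<bar> \<le> \<tau> j" if "j \<ge> K" "t \<in> T" for j t
    unfolding \<tau>_def by (rule tail_limit(2)[OF \<epsilon>]) (use step that in auto)
  have et: "\<epsilon> j \<le> \<tau> j" for j
  proof -
    have "(\<Sum>i<1. \<epsilon> (i + j)) \<le> \<tau> j"
      unfolding \<tau>_def using \<epsilon> by (intro sum_le_suminf summable_ignore_initial_segment) auto
    then show ?thesis by simp
  qed
  have t0: "\<tau> \<longlonglongrightarrow> 0" unfolding \<tau>_def by (rule suminf_exist_split2[OF \<epsilon>(1)])
  show ?thesis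
    unfolding continuous_on_iff
  proof (intro ballI allI impI)
    fix t e assume t: "t \<in> T" and e: "(0::real) < e"
    obtain N0 where N0: "\<And>n. n \<ge> N0 \<Longrightarrow> \<bar>\<tau> n\<bar> < e / 3"
      using LIMSEQ_D[OF t0, of "e/3"] e by auto
    define j where "j = max N0 K"
    have tj: "\<tau> j < e / 3" using N0[of j] by (simp add: j_def)
    have jK: "j \<ge> K" by (simp add: j_def)
    show "\<exists>d>0. \<forall>t'\<in>T. dist t' t < d \<longrightarrow> dist (lim (\<lambda>j. Y j t')) (lim (\<lambda>j. Y j t)) < e"
    proof (intro exI conjI ballI impI)
      show "(0::real) < (1/2)^j" by simp
      fix t' assume t': "t' \<in> T" and d: "dist t' t < (1/2)^j"
      have "\<bar>Y j t' - Y j t\<bar> \<le> \<epsilon> j" using near[OF jK t' t] d by auto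
      moreover have "\<bar>Y j t' - lim (\<lambda>j. Y j t')\<bar> \<le> \<tau> j" by (rule tl[OF jK t'])
      moreover have "\<bar>Y j t - lim (\<lambda>j. Y j t)\<bar> \<le> \<tau> j" by (rule tl[OF jK t])
      ultimately show "dist (lim (\<lambda>j. Y j t')) (lim (\<lambda>j. Y j t)) < e"
        using et[of j] tj by (simp add: dist_real_def)
    qed
  qed
qed


definition grid :: "nat \<Rightarrow> 'a::euclidean_space \<Rightarrow> 'a" where
  "grid k x = (\<Sum>b\<in>Basis. (of_int (round (inner x b * 2^k)) / 2^k) *\<^sub>R b)"

lemma grid_dist:
  fixes x :: "'a::euclidean_space"
  shows "norm (x - grid k x) \<le> real DIM('a) / 2^k"
proof -
  have "x - grid k x = (\<Sum>b\<in>Basis. (inner x b - of_int (round (inner x b * 2^k)) / 2^k) *\<^sub>R (b::'a))"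
    unfolding grid_def by (subst (1) euclidean_representation[symmetric, of x])
      (simp add: sum_subtractf[symmetric] scaleR_diff_left)
  also have "norm \<dots> \<le> (\<Sum>b\<in>(Basis::'a set). norm ((inner x b - of_int (round (inner x b * 2^k)) / 2^k) *\<^sub>R b))"
    by (rule norm_sum)
  also have "\<dots> \<le> (\<Sum>b\<in>(Basis::'a set). 1 / 2^k)"
  proof (intro sum_mono)
    fix b :: 'a assume b: "b \<in> Basis"
    have "\<bar>inner x b - of_int (round (inner x b * 2^k)) / 2^k\<bar>
        = \<bar>of_int (round (inner x b * 2^k)) - inner x b * 2^k\<bar> / 2^k"
      by (simp add: field_simps abs_minus_commute)
    also have "\<dots> \<le> (1/2) / 2^k"
      by (intro divide_right_mono of_int_round_abs_le) auto
    also have "\<dots> \<le> 1 / 2^k" by (simp add: field_simps)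
    finally show "norm ((inner x b - of_int (round (inner x b * 2^k)) / 2^k) *\<^sub>R b) \<le> 1 / 2^k"
      using b by simp
  qed
  also have "\<dots> = real DIM('a) / 2^k" by simp
  finally show ?thesis .
qed

lemma grid_card:
  fixes S :: "'a::euclidean_space set"
  assumes S: "S \<subseteq> cball 0 R" and R: "R \<ge> 0"
  shows "finite (grid k ` S)" "real (card (grid k ` S)) \<le> ((2 * R + 5) * 2^k) ^ DIM('a)"
proof -
  define N :: int where "N = ceiling (R * 2^k) + 1"
  define G :: "('a \<Rightarrow> int) \<Rightarrow> 'a" where "G f = (\<Sum>b\<in>Basis. (of_int (f b) / 2^k) *\<^sub>R b)" for f
  define P where "P = PiE (Basis::'a set) (\<lambda>_. {-N..N})"
  have sub: "grid k ` S \<subseteq> G ` P"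
  proof
    fix y assume "y \<in> grid k ` S"
    then obtain x where x: "x \<in> S" and y: "y = grid k x" by auto
    define f where "f = restrict (\<lambda>b. round (inner x b * 2^k)) Basis"
    have "G f = grid k x" unfolding G_def grid_def f_def by (intro sum.cong) auto
    moreover have "f \<in> P"
      unfolding P_def f_def
    proof (intro PiE_I)
      fix b :: 'a assume b: "b \<in> Basis"
      have nx: "norm x \<le> R" using S x by auto
      have ib: "\<bar>inner x b\<bar> \<le> R" using Basis_le_norm[OF b, of x] nx by linarith
      have "\<bar>inner x b * 2^k\<bar> \<le> R * 2^k" using ib by (simp add: abs_mult)
      then have l1: "inner x b * 2^k \<le> R * 2^k" "- (R * 2^k) \<le> inner x b * 2^k" by linarith+
      have c1: "R * 2^k \<le> of_int (ceiling (R * 2^k))" by (rule le_of_int_ceiling)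
      have NN: "(of_int N :: real) = of_int (ceiling (R * 2^k)) + 1" by (simp add: N_def)
      have "of_int (round (inner x b * 2^k)) \<le> inner x b * 2^k + 1/2" by (rule of_int_round_le)
      then have "of_int (round (inner x b * 2^k)) < (of_int N :: real)"
        using l1 c1 NN by linarith
      then have u: "round (inner x b * 2^k) \<le> N" by linarith
      have "of_int (round (inner x b * 2^k)) \<ge> inner x b * 2^k - 1/2" by (rule of_int_round_ge)
      then have "of_int (round (inner x b * 2^k)) > (of_int (-N) :: real)"
        using l1 c1 NN by linarith
      then have lo: "- N \<le> round (inner x b * 2^k)" by linarith
      show "restrict (\<lambda>b. round (inner x b * 2 ^ k)) Basis b \<in> {- N..N}" using u lo b by simp
    qed auto
    ultimately show "y \<in> G ` P" using y by (metis image_eqI)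
  qed
  have finP: "finite P" unfolding P_def by (intro finite_PiE) auto
  show "finite (grid k ` S)" by (rule finite_subset[OF sub finite_imageI[OF finP]])
  have "card (grid k ` S) \<le> card (G ` P)" by (rule card_mono[OF finite_imageI[OF finP] sub])
  also have "\<dots> \<le> card P" by (rule card_image_le[OF finP])
  also have "card P = nat (2 * N + 1) ^ DIM('a)" unfolding P_def by (simp add: card_PiE)
  finally have "real (card (grid k ` S)) \<le> real (nat (2 * N + 1)) ^ DIM('a)"
    by (metis of_nat_le_iff of_nat_power)
  also have "\<dots> \<le> ((2 * R + 5) * 2^k) ^ DIM('a)"
  proof (intro power_mono)
    have c2: "of_int (ceiling (R * 2^k)) \<le> R * 2^k + 1" by linarith
    have "(0::real) \<le> R * 2^k" using R by simp
    then have "(0::real) \<le> of_int (ceiling (R * 2^k))" using le_of_int_ceiling[of "R * 2^k"] by linarith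
    then have N0: "N \<ge> 0" unfolding N_def by simp
    then have "real (nat (2 * N + 1)) = 2 * of_int N + 1" by simp
    also have "\<dots> \<le> 2 * (R * 2^k) + 5"
    proof -
      have NN: "(of_int N :: real) = of_int (ceiling (R * 2^k)) + 1" by (simp add: N_def)
      show ?thesis using c2 NN by linarith
    qed
    also have "\<dots> \<le> (2 * R + 5) * 2^k"
    proof -
      have "(5::real) \<le> 5 * 2^k" by simp
      then show ?thesis by (simp add: algebra_simps)
    qed
    finally show "real (nat (2 * N + 1)) \<le> (2 * R + 5) * 2^k" .
  qed auto
  finally show "real (card (grid k ` S)) \<le> ((2 * R + 5) * 2^k) ^ DIM('a)" .
qed


context iclp begin

definition proj :: "'a \<Rightarrow> 'a" where
  "proj y = (SOME t. t \<in> T \<and> (\<forall>s\<in>T. dist y t \<le> dist y s))"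

lemma proj: "proj y \<in> T" "s \<in> T \<Longrightarrow> dist y (proj y) \<le> dist y s"
proof -
  have "closed T" using T_compact by (rule compact_imp_closed)
  then obtain t where "t \<in> T" "\<And>s. s \<in> T \<Longrightarrow> dist y t \<le> dist y s"
    using distance_attains_inf T_ne by blast
  then have "\<exists>t. t \<in> T \<and> (\<forall>s\<in>T. dist y t \<le> dist y s)" by blast
  then have "proj y \<in> T \<and> (\<forall>s\<in>T. dist y (proj y) \<le> dist y s)"
    unfolding proj_def by (rule someI_ex)
  then show "proj y \<in> T" "s \<in> T \<Longrightarrow> dist y (proj y) \<le> dist y s" by auto
qed

definition pi :: "nat \<Rightarrow> 'a \<Rightarrow> 'a" where "pi j t = proj (grid j t)"
definition net :: "nat \<Rightarrow> 'a set" where "net j = proj ` grid j ` T"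

definition cc :: real where "cc = 2 * real DIM('a)"

lemma pi_in: "t \<in> T \<Longrightarrow> pi j t \<in> net j" unfolding pi_def net_def by auto
lemma net_sub: "net j \<subseteq> T" unfolding net_def using proj by auto
lemma pi_T: "pi j t \<in> T" unfolding pi_def using proj by auto

lemma pi_dist: assumes "t \<in> T" shows "dist t (pi j t) \<le> cc / 2^j"
proof -
  have g: "dist t (grid j t) \<le> real DIM('a) / 2^j"
    using grid_dist[of t j] by (simp add: dist_norm)
  have "dist t (pi j t) \<le> dist t (grid j t) + dist (grid j t) (proj (grid j t))"
    unfolding pi_def by (rule dist_triangle)
  also have "dist (grid j t) (proj (grid j t)) \<le> dist (grid j t) t" by (rule proj(2)[OF assms])
  finally have "dist t (pi j t) \<le> 2 * dist t (grid j t)" by (simp add: dist_commute)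
  moreover have "2 * (real DIM('a) / 2^j) = cc / 2^j" by (simp add: cc_def)
  ultimately show ?thesis using g by linarith
qed

definition Rb :: real where "Rb = (SOME R. R \<ge> 0 \<and> T \<subseteq> cball 0 R)"

lemma Rb: "Rb \<ge> 0" "T \<subseteq> cball 0 Rb"
proof -
  have "bounded T" using T_compact by (rule compact_imp_bounded)
  then obtain b where b: "b > 0" "\<forall>x\<in>T. norm x \<le> b" unfolding bounded_pos by blast
  then have "\<exists>R. R \<ge> 0 \<and> T \<subseteq> cball 0 R" by (intro exI[of _ b]) auto
  then have "Rb \<ge> 0 \<and> T \<subseteq> cball 0 Rb" unfolding Rb_def by (rule someI_ex)
  then show "Rb \<ge> 0" "T \<subseteq> cball 0 Rb" by auto
qed

definition K0 :: real where "K0 = (2 * Rb + 5) ^ DIM('a)"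
definition Q :: real where "Q = 2 ^ DIM('a)"

lemma K0_pos: "K0 > 0" unfolding K0_def using Rb by simp
lemma Q_ge: "Q \<ge> 2" unfolding Q_def
proof -
  have "(2::real) ^ 1 \<le> 2 ^ DIM('a)" by (intro power_increasing) (auto simp: DIM_positive Suc_le_eq)
  then show "2 \<le> (2::real) ^ DIM('a)" by simp
qed

lemma net_finite: "finite (net j)"
  unfolding net_def using grid_card(1)[OF Rb(2) Rb(1)] by blast

lemma net_card: "real (card (net j)) \<le> K0 * Q ^ j"
proof -
  have "card (net j) \<le> card (grid j ` T)" unfolding net_def
    by (rule card_image_le[OF grid_card(1)[OF Rb(2) Rb(1)]])
  then have "real (card (net j)) \<le> real (card (grid j ` T))" by simp
  also have "\<dots> \<le> ((2 * Rb + 5) * 2^j) ^ DIM('a)" by (rule grid_card(2)[OF Rb(2) Rb(1)])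
  also have "\<dots> = K0 * Q ^ j" unfolding K0_def Q_def by (simp add: power_mult_distrib power_mult[symmetric] mult.commute)
  finally show ?thesis .
qed

end


lemma summable_n_geom:
  fixes \<rho> :: real assumes "0 \<le> \<rho>" "\<rho> < 1"
  shows "summable (\<lambda>j. real j * \<rho>^j)"
proof -
  have "sqrt \<rho> < sqrt 1" using assms by (intro real_sqrt_less_mono) auto
  then have sr: "norm (sqrt \<rho>) < 1" using assms by simp
  have "(\<lambda>n. of_nat n * sqrt \<rho> ^ n) \<longlonglongrightarrow> 0" by (rule powser_times_n_limit_0[OF sr])
  from LIMSEQ_D[OF this, of 1] obtain N where N0: "\<forall>n\<ge>N. norm (of_nat n * sqrt \<rho> ^ n - 0) < (1::real)"
    by auto
  then have N: "\<And>n. n \<ge> N \<Longrightarrow> norm (of_nat n * sqrt \<rho> ^ n - 0) < (1::real)" by auto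
  show ?thesis
  proof (rule summable_comparison_test')
    show "summable (\<lambda>n. sqrt \<rho> ^ n)" using sr by (intro summable_geometric) simp
    fix n assume n: "n \<ge> N"
    have a: "real n * sqrt \<rho> ^ n \<le> 1" using N[OF n] by simp
    have "\<rho> ^ n = sqrt \<rho> ^ n * sqrt \<rho> ^ n" using assms by (simp add: power_mult_distrib[symmetric])
    then have "real n * \<rho> ^ n = (real n * sqrt \<rho> ^ n) * sqrt \<rho> ^ n" by simp
    also have "\<dots> \<le> 1 * sqrt \<rho> ^ n" using a assms by (intro mult_right_mono) auto
    finally show "norm (real n * \<rho> ^ n) \<le> sqrt \<rho> ^ n" using assms by simp
  qed
qed

context iclp begin

definition r :: "nat \<Rightarrow> real" where "r j = (2 * cc + 1) / 2^j"
definition \<rho> :: real where "\<rho> = sqrt (1 / 2 powr \<alpha>)"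
definition S0 :: real where "S0 = sqrt (2 * MC * (2 * cc + 1) powr \<alpha>)"
definition sig :: "nat \<Rightarrow> real" where "sig j = S0 * \<rho> ^ j"
definition Lg :: real where "Lg = ln (2 * Q^2)"
definition eps :: "nat \<Rightarrow> real" where "eps j = sig j * (real j * Lg)"

lemma cc_pos: "cc > 0" unfolding cc_def by (simp add: DIM_positive)
lemma r_pos: "r j > 0" unfolding r_def using cc_pos by simp

lemma rho: "0 < \<rho>" "\<rho> < 1"
proof -
  have "2 powr 0 < 2 powr \<alpha>" using alpha by (intro powr_less_mono) auto
  then have g: "1 < 2 powr \<alpha>" by simp
  show "0 < \<rho>" unfolding \<rho>_def using g by simp
  have "sqrt (1 / 2 powr \<alpha>) < sqrt 1" using g by (intro real_sqrt_less_mono) auto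
  then show "\<rho> < 1" unfolding \<rho>_def by simp
qed

lemma S0_pos: "S0 > 0" unfolding S0_def using MC_pos cc_pos by simp
lemma sig_pos: "sig j > 0" unfolding sig_def using S0_pos rho by simp

lemma r_powr: "r j powr \<alpha> = (2 * cc + 1) powr \<alpha> * (1 / 2 powr \<alpha>) ^ j"
proof -
  have "(2::real) ^ j = 2 powr real j" by (simp add: powr_realpow)
  then have "((2::real) ^ j) powr \<alpha> = 2 powr (real j * \<alpha>)" by (simp add: powr_powr)
  also have "\<dots> = (2 powr \<alpha>) ^ j" by (simp add: powr_power)
  finally have e: "((2::real) ^ j) powr \<alpha> = (2 powr \<alpha>) ^ j" .
  show ?thesis unfolding r_def powr_divide e by (simp add: power_one_over)
qed

lemma sig_sq: "(sig j)\<^sup>2 = 2 * MC * r j powr \<alpha>"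
proof -
  have "(sig j)\<^sup>2 = S0\<^sup>2 * (\<rho>\<^sup>2) ^ j" unfolding sig_def by (simp add: power_mult_distrib power_mult[symmetric] mult.commute)
  also have "S0\<^sup>2 = 2 * MC * (2 * cc + 1) powr \<alpha>" unfolding S0_def using MC_pos cc_pos by simp
  also have "\<rho>\<^sup>2 = 1 / 2 powr \<alpha>" unfolding \<rho>_def by simp
  finally show ?thesis by (simp add: r_powr)
qed

lemma Q2: "2 * Q\<^sup>2 > 1"
proof -
  have "Q * Q \<ge> 2 * 2" using Q_ge by (intro mult_mono) auto
  then show ?thesis by (simp add: power2_eq_square)
qed

lemma Lg_pos: "Lg > 0" unfolding Lg_def using Q2 by (rule ln_gt_zero)

lemma eps_nonneg: "eps j \<ge> 0" unfolding eps_def using sig_pos[of j] Lg_pos by simp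

lemma eps_summable: "summable eps"
proof -
  have "summable (\<lambda>j. (S0 * Lg) * (real j * \<rho>^j))"
    using rho by (intro summable_mult summable_n_geom) auto
  moreover have "eps = (\<lambda>j. (S0 * Lg) * (real j * \<rho>^j))"
    by (auto simp: eps_def sig_def fun_eq_iff)
  ultimately show ?thesis by simp
qed

lemma eps_lim: "eps \<longlonglongrightarrow> 0" by (rule summable_LIMSEQ_zero[OF eps_summable])

lemma tail_j:
  assumes u: "u \<in> T" and v: "v \<in> T" and d: "dist u v \<le> r j"
  shows "prob {\<omega>\<in>space M. eps j \<le> \<bar>Z u \<omega> - Z v \<omega>\<bar>} \<le> 2 * exp 2 * (1 / (2 * Q\<^sup>2)) ^ j"
proof -
  define l where "l = 1 / sig j"
  have l: "l > 0" unfolding l_def using sig_pos by simp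
  have "norm (u - v) powr \<alpha> \<le> r j powr \<alpha>"
    using d alpha by (intro powr_mono2) (auto simp: dist_norm)
  then have "l\<^sup>2 * (2 * MC * norm (u - v) powr \<alpha>) \<le> l\<^sup>2 * (2 * MC * r j powr \<alpha>)"
    using MC_pos by (intro mult_left_mono) auto
  also have "\<dots> = 1" unfolding sig_sq[symmetric] l_def using sig_pos[of j] by (simp add: power_one_over)
  finally have "prob {\<omega>\<in>space M. eps j \<le> \<bar>Z u \<omega> - Z v \<omega>\<bar>} \<le> 2 * exp 2 * exp (- l * eps j)"
    by (intro pair_tail u v l)
  also have "exp (- l * eps j) = (1 / (2 * Q\<^sup>2)) ^ j"
  proof -
    have "- l * eps j = - (real j * Lg)" unfolding l_def eps_def using sig_pos[of j] by simp
    then have "exp (- l * eps j) = 1 / exp Lg ^ j" by (simp add: exp_minus exp_of_nat_mult inverse_eq_divide)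
    also have "exp Lg = 2 * Q\<^sup>2" unfolding Lg_def using Q2 Q_ge by simp
    finally have "exp (- l * eps j) = 1 / (2 * Q\<^sup>2) ^ j" .
    then show ?thesis by (simp only: power_one_over)
  qed
  finally show ?thesis .
qed

end


context iclp begin

lemma Z_meas'[measurable]: "t \<in> T \<Longrightarrow> Z t \<in> borel_measurable M" using Z_meas by auto

lemma ev_sets: "u \<in> T \<Longrightarrow> v \<in> T \<Longrightarrow> {\<omega>\<in>space M. c \<le> \<bar>Z u \<omega> - Z v \<omega>\<bar>} \<in> sets M"
  by measurable

definition pairs :: "nat \<Rightarrow> ('a \<times> 'a) set" where
  "pairs j = {p \<in> (net j \<union> net (Suc j)) \<times> (net j \<union> net (Suc j)). dist (fst p) (snd p) \<le> r j}"

definition Ev :: "nat \<Rightarrow> 'b set" where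
  "Ev j = (\<Union>p\<in>pairs j. {\<omega>\<in>space M. eps j \<le> \<bar>Z (fst p) \<omega> - Z (snd p) \<omega>\<bar>})"

lemma pairs_sub: "pairs j \<subseteq> (net j \<union> net (Suc j)) \<times> (net j \<union> net (Suc j))"
  unfolding pairs_def by auto

lemma pairs_T: assumes "p \<in> pairs j" shows "fst p \<in> T \<and> snd p \<in> T"
proof -
  have "fst p \<in> net j \<union> net (Suc j)" "snd p \<in> net j \<union> net (Suc j)"
    using assms unfolding pairs_def by (auto simp: mem_Times_iff)
  then show ?thesis using net_sub[of j] net_sub[of "Suc j"] by auto
qed

lemma pairs_finite: "finite (pairs j)"
  by (rule finite_subset[OF pairs_sub]) (auto intro: net_finite)

lemma pairs_card: "real (card (pairs j)) \<le> 4 * K0\<^sup>2 * Q\<^sup>2 * (Q\<^sup>2) ^ j"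
proof -
  define A where "A = net j \<union> net (Suc j)"
  have fA: "finite A" unfolding A_def by (auto intro: net_finite)
  have "card (pairs j) \<le> card (A \<times> A)"
    using card_mono[OF finite_cartesian_product[OF fA fA] pairs_sub[of j, folded A_def]] .
  also have "\<dots> = card A * card A" by (simp add: card_cartesian_product)
  finally have c1: "real (card (pairs j)) \<le> real (card A) * real (card A)"
    by (metis of_nat_le_iff of_nat_mult)
  have "card A \<le> card (net j) + card (net (Suc j))" unfolding A_def by (rule card_Un_le)
  then have "real (card A) \<le> real (card (net j)) + real (card (net (Suc j)))" by linarith
  also have "\<dots> \<le> K0 * Q ^ j + K0 * Q ^ Suc j" by (intro add_mono net_card)
  also have "\<dots> \<le> 2 * K0 * Q * Q ^ j"
  proof -
    have "K0 * Q ^ j \<le> K0 * Q ^ Suc j" using K0_pos Q_ge by (intro mult_left_mono power_increasing) auto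
    then show ?thesis by (simp add: algebra_simps)
  qed
  finally have cA: "real (card A) \<le> 2 * K0 * Q * Q ^ j" .
  have X0: "0 \<le> 2 * K0 * Q * Q ^ j" using K0_pos Q_ge by simp
  have "real (card (pairs j)) \<le> (2 * K0 * Q * Q ^ j) * (2 * K0 * Q * Q ^ j)"
    by (rule order_trans[OF c1 mult_mono[OF cA cA X0]]) simp
  also have "\<dots> = 4 * K0\<^sup>2 * Q\<^sup>2 * (Q\<^sup>2) ^ j"
  proof -
    have "(Q\<^sup>2) ^ j = Q ^ j * Q ^ j" by (simp add: power2_eq_square power_mult_distrib)
    then show ?thesis by (simp add: power2_eq_square algebra_simps)
  qed
  finally show ?thesis .
qed

lemma Ev_sets: "Ev j \<in> sets M"
  unfolding Ev_def using pairs_finite pairs_T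
  by (intro sets.finite_UN ev_sets) auto

definition Cst :: real where "Cst = 8 * exp 2 * K0\<^sup>2 * Q\<^sup>2"

lemma Ev_prob: "prob (Ev j) \<le> Cst * (1/2) ^ j"
proof -
  have "prob (Ev j) \<le> (\<Sum>p\<in>pairs j. prob {\<omega>\<in>space M. eps j \<le> \<bar>Z (fst p) \<omega> - Z (snd p) \<omega>\<bar>})"
    unfolding Ev_def using pairs_finite pairs_T
    by (intro finite_measure_subadditive_finite) (auto intro: ev_sets)
  also have "\<dots> \<le> (\<Sum>p\<in>pairs j. 2 * exp 2 * (1 / (2 * Q\<^sup>2)) ^ j)"
  proof (intro sum_mono)
    fix p assume p: "p \<in> pairs j"
    then have "dist (fst p) (snd p) \<le> r j" unfolding pairs_def by auto
    then show "prob {\<omega>\<in>space M. eps j \<le> \<bar>Z (fst p) \<omega> - Z (snd p) \<omega>\<bar>} \<le> 2 * exp 2 * (1 / (2 * Q\<^sup>2)) ^ j"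
      using pairs_T[OF p] by (intro tail_j) auto
  qed
  also have "\<dots> = real (card (pairs j)) * (2 * exp 2 * (1 / (2 * Q\<^sup>2)) ^ j)" by simp
  also have "\<dots> \<le> (4 * K0\<^sup>2 * Q\<^sup>2 * (Q\<^sup>2) ^ j) * (2 * exp 2 * (1 / (2 * Q\<^sup>2)) ^ j)"
    by (intro mult_right_mono pairs_card) auto
  also have "\<dots> = Cst * ((Q\<^sup>2) ^ j * (1 / (2 * Q\<^sup>2)) ^ j)" unfolding Cst_def by (simp add: algebra_simps)
  also have "(Q\<^sup>2) ^ j * (1 / (2 * Q\<^sup>2)) ^ j = (1/2) ^ j"
  proof -
    have h: "Q\<^sup>2 * (1 / (2 * Q\<^sup>2)) = 1/2" using Q_ge by simp
    have "(Q\<^sup>2) ^ j * (1 / (2 * Q\<^sup>2)) ^ j = (Q\<^sup>2 * (1 / (2 * Q\<^sup>2))) ^ j" by (rule power_mult_distrib[symmetric])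
    also have "\<dots> = (1/2) ^ j" by (simp only: h)
    finally show ?thesis .
  qed
  finally show ?thesis .
qed

lemma Cst_pos: "Cst > 0" unfolding Cst_def using K0_pos Q_ge by simp

lemma AE_good: "AE \<omega> in M. \<exists>K. \<forall>j\<ge>K. \<forall>p\<in>pairs j. \<bar>Z (fst p) \<omega> - Z (snd p) \<omega>\<bar> < eps j"
proof -
  have "AE \<omega> in M. eventually (\<lambda>j. \<omega> \<in> space M - Ev j) sequentially"
  proof (rule borel_cantelli_AE1)
    show "\<And>j. Ev j \<in> sets M" by (rule Ev_sets)
    show "\<And>j. emeasure M (Ev j) < \<infinity>" by (simp add: emeasure_eq_measure)
    show "summable (\<lambda>j. measure M (Ev j))"
    proof (rule summable_comparison_test')
      show "summable (\<lambda>j. Cst * (1/2::real) ^ j)" by (intro summable_mult summable_geometric) auto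
      show "norm (measure M (Ev j)) \<le> Cst * (1/2) ^ j" for j using Ev_prob[of j] by simp
    qed
  qed
  then show ?thesis
  proof (rule AE_mp, intro AE_I2 impI)
    fix \<omega> assume "\<omega> \<in> space M" and ev: "eventually (\<lambda>j. \<omega> \<in> space M - Ev j) sequentially"
    then obtain K where K: "\<And>j. j \<ge> K \<Longrightarrow> \<omega> \<in> space M - Ev j" by (auto simp: eventually_sequentially)
    show "\<exists>K. \<forall>j\<ge>K. \<forall>p\<in>pairs j. \<bar>Z (fst p) \<omega> - Z (snd p) \<omega>\<bar> < eps j"
    proof (intro exI allI impI ballI)
      fix j p assume "K \<le> j" "p \<in> pairs j"
      then show "\<bar>Z (fst p) \<omega> - Z (snd p) \<omega>\<bar> < eps j" using K[of j] unfolding Ev_def by force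
    qed
  qed
qed

lemma AE_point:
  assumes t: "t \<in> T"
  shows "AE \<omega> in M. \<exists>K. \<forall>j\<ge>K. \<bar>Z (pi j t) \<omega> - Z t \<omega>\<bar> < eps j"
proof -
  define F where "F j = {\<omega>\<in>space M. eps j \<le> \<bar>Z (pi j t) \<omega> - Z t \<omega>\<bar>}" for j
  have Fs: "F j \<in> sets M" for j unfolding F_def by (rule ev_sets[OF pi_T t])
  have Fp: "prob (F j) \<le> 2 * exp 2 * (1/2) ^ j" for j
  proof -
    have "dist (pi j t) t \<le> r j"
    proof -
      have "dist (pi j t) t \<le> cc / 2^j" using pi_dist[OF t, of j] by (simp add: dist_commute)
      also have "\<dots> \<le> r j" unfolding r_def using cc_pos by (intro divide_right_mono) auto
      finally show ?thesis .
    qed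
    then have "prob (F j) \<le> 2 * exp 2 * (1 / (2 * Q\<^sup>2)) ^ j"
      unfolding F_def by (intro tail_j pi_T t)
    also have "\<dots> \<le> 2 * exp 2 * (1/2) ^ j"
    proof -
      have "1 / (2 * Q\<^sup>2) \<le> 1/2" using Q2 Q_ge by (simp add: field_simps)
      then have "(1 / (2 * Q\<^sup>2)) ^ j \<le> (1/2) ^ j" using Q_ge by (intro power_mono) auto
      then show ?thesis by simp
    qed
    finally show ?thesis .
  qed
  have "AE \<omega> in M. eventually (\<lambda>j. \<omega> \<in> space M - F j) sequentially"
  proof (rule borel_cantelli_AE1)
    show "\<And>j. F j \<in> sets M" by (rule Fs)
    show "\<And>j. emeasure M (F j) < \<infinity>" by (simp add: emeasure_eq_measure)
    show "summable (\<lambda>j. measure M (F j))"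
    proof (rule summable_comparison_test')
      show "summable (\<lambda>j. 2 * exp 2 * (1/2::real) ^ j)" by (intro summable_mult summable_geometric) auto
      show "norm (measure M (F j)) \<le> 2 * exp 2 * (1/2) ^ j" for j using Fp[of j] by simp
    qed
  qed
  then show ?thesis
  proof (rule AE_mp, intro AE_I2 impI)
    fix \<omega> assume "\<omega> \<in> space M" and ev: "eventually (\<lambda>j. \<omega> \<in> space M - F j) sequentially"
    then obtain K where K: "\<And>j. j \<ge> K \<Longrightarrow> \<omega> \<in> space M - F j" by (auto simp: eventually_sequentially)
    show "\<exists>K. \<forall>j\<ge>K. \<bar>Z (pi j t) \<omega> - Z t \<omega>\<bar> < eps j"
      using K \<open>\<omega> \<in> space M\<close> unfolding F_def by force
  qed
qed

end


context iclp begin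

definition G :: "'b set" where "G = (\<Union>K. \<Inter>j\<in>{K..}. space M - Ev j)"

lemma G_sets: "G \<in> sets M"
  unfolding G_def using Ev_sets by (intro sets.countable_UN' sets.countable_INT' sets.Diff) auto

lemma G_good: assumes "\<omega> \<in> G" shows "\<exists>K. \<forall>j\<ge>K. \<forall>p\<in>pairs j. \<bar>Z (fst p) \<omega> - Z (snd p) \<omega>\<bar> < eps j"
proof -
  from assms obtain K where K: "\<And>j. j \<ge> K \<Longrightarrow> \<omega> \<in> space M - Ev j" unfolding G_def by auto
  show ?thesis
  proof (intro exI allI impI ballI)
    fix j p assume "K \<le> j" "p \<in> pairs j"
    then show "\<bar>Z (fst p) \<omega> - Z (snd p) \<omega>\<bar> < eps j" using K[of j] unfolding Ev_def by force
  qed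
qed

lemma AE_G: "AE \<omega> in M. \<omega> \<in> G"
  using AE_good
proof (rule AE_mp, intro AE_I2 impI)
  fix \<omega> assume \<omega>: "\<omega> \<in> space M" and "\<exists>K. \<forall>j\<ge>K. \<forall>p\<in>pairs j. \<bar>Z (fst p) \<omega> - Z (snd p) \<omega>\<bar> < eps j"
  then obtain K where K: "\<And>j p. j \<ge> K \<Longrightarrow> p \<in> pairs j \<Longrightarrow> \<bar>Z (fst p) \<omega> - Z (snd p) \<omega>\<bar> < eps j" by auto
  have "\<omega> \<in> space M - Ev j" if "j \<ge> K" for j
    using K[OF that] \<omega> unfolding Ev_def by force
  then show "\<omega> \<in> G" unfolding G_def by blast
qed

definition Zt :: "'a \<Rightarrow> 'b \<Rightarrow> real" where
  "Zt t \<omega> = (if \<omega> \<in> G then lim (\<lambda>j. Z (pi j t) \<omega>) else 0)"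

lemma Zt_cont: "continuous_on T (\<lambda>t. Zt t \<omega>)"
proof (cases "\<omega> \<in> G")
  case False
  then show ?thesis unfolding Zt_def by simp
next
  case True
  then obtain K where K: "\<And>j p. j \<ge> K \<Longrightarrow> p \<in> pairs j \<Longrightarrow> \<bar>Z (fst p) \<omega> - Z (snd p) \<omega>\<bar> < eps j"
    using G_good by blast
  have "continuous_on T (\<lambda>t. lim (\<lambda>j. Z (pi j t) \<omega>))"
  proof (rule unif_limit_cont[OF eps_summable eps_nonneg])
    fix j t assume j: "K \<le> j" and t: "t \<in> T"
    have "(pi j t, pi (Suc j) t) \<in> pairs j"
      unfolding pairs_def
    proof (intro CollectI conjI)
      show "(pi j t, pi (Suc j) t) \<in> (net j \<union> net (Suc j)) \<times> (net j \<union> net (Suc j))"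
        using pi_in[OF t] by auto
      have "dist (pi j t) (pi (Suc j) t) \<le> dist (pi j t) t + dist t (pi (Suc j) t)" by (rule dist_triangle)
      also have "\<dots> \<le> cc / 2^j + cc / 2^Suc j"
        using pi_dist[OF t, of j] pi_dist[OF t, of "Suc j"] by (simp add: dist_commute)
      also have "\<dots> \<le> r j" unfolding r_def using cc_pos by (simp add: field_simps)
      finally show "dist (fst (pi j t, pi (Suc j) t)) (snd (pi j t, pi (Suc j) t)) \<le> r j" by simp
    qed
    from K[OF j this] show "\<bar>Z (pi j t) \<omega> - Z (pi (Suc j) t) \<omega>\<bar> \<le> eps j" by simp
  next
    fix j t t' assume j: "K \<le> j" and t: "t \<in> T" and t': "t' \<in> T" and d: "dist t t' \<le> (1/2)^j"
    have "(pi j t, pi j t') \<in> pairs j"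
      unfolding pairs_def
    proof (intro CollectI conjI)
      show "(pi j t, pi j t') \<in> (net j \<union> net (Suc j)) \<times> (net j \<union> net (Suc j))"
        using pi_in[OF t] pi_in[OF t'] by auto
      have "dist (pi j t) (pi j t') \<le> dist (pi j t) t + dist t (pi j t')" by (rule dist_triangle)
      also have "dist t (pi j t') \<le> dist t t' + dist t' (pi j t')" by (rule dist_triangle)
      finally have "dist (pi j t) (pi j t') \<le> cc / 2^j + (1/2)^j + cc / 2^j"
        using pi_dist[OF t, of j] pi_dist[OF t', of j] d by (simp add: dist_commute)
      also have "\<dots> = r j" unfolding r_def by (simp add: field_simps)
      finally show "dist (fst (pi j t, pi j t')) (snd (pi j t, pi j t')) \<le> r j" by simp
    qed
    from K[OF j this] show "\<bar>Z (pi j t) \<omega> - Z (pi j t') \<omega>\<bar> \<le> eps j" by simp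
  qed
  moreover have eq: "(\<lambda>t. Zt t \<omega>) = (\<lambda>t. lim (\<lambda>j. Z (pi j t) \<omega>))" using True unfolding Zt_def by simp
  ultimately show ?thesis by (simp only: eq)
qed

lemma Zt_meas: "t \<in> T \<Longrightarrow> Zt t \<in> borel_measurable M"
proof -
  assume t: "t \<in> T"
  have [measurable]: "Z (pi j t) \<in> borel_measurable M" for j using Z_meas pi_T by auto
  have [measurable]: "G \<in> sets M" by (rule G_sets)
  show ?thesis unfolding Zt_def by measurable
qed

lemma Zt_ae: assumes t: "t \<in> T" shows "AE \<omega> in M. Zt t \<omega> = Z t \<omega>"
  using AE_G AE_point[OF t]
proof (eventually_elim)
  case (elim \<omega>)
  then obtain K where K: "\<And>j. j \<ge> K \<Longrightarrow> \<bar>Z (pi j t) \<omega> - Z t \<omega>\<bar> < eps j" by auto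
  have "(\<lambda>j. Z (pi j t) \<omega>) \<longlonglongrightarrow> Z t \<omega>"
  proof (rule LIMSEQ_I)
    fix e :: real assume e: "e > 0"
    obtain N where N: "\<And>n. n \<ge> N \<Longrightarrow> norm (eps n - 0) < e" using LIMSEQ_D[OF eps_lim e] by auto
    show "\<exists>no. \<forall>n\<ge>no. norm (Z (pi n t) \<omega> - Z t \<omega>) < e"
    proof (intro exI allI impI)
      fix n assume "max N K \<le> n"
      then have "\<bar>Z (pi n t) \<omega> - Z t \<omega>\<bar> < eps n" "norm (eps n - 0) < e" using K N by auto
      then show "norm (Z (pi n t) \<omega> - Z t \<omega>) < e" by simp
    qed
  qed
  then show ?case using elim unfolding Zt_def by (simp add: limI)
qed

lemma Zt_prob: assumes t: "t \<in> T" shows "measure M {\<omega>\<in>space M. Zt t \<omega> = Z t \<omega>} = 1"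
proof -
  have [measurable]: "Zt t \<in> borel_measurable M" "Z t \<in> borel_measurable M" using Zt_meas[OF t] Z_meas t by auto
  have "{\<omega>\<in>space M. Zt t \<omega> = Z t \<omega>} \<in> sets M" by measurable
  then show ?thesis using prob_Collect_eq_1 Zt_ae[OF t] by auto
qed

end


theorem theorem5:
  fixes T :: "'a::euclidean_space set"
    and C :: "'a \<Rightarrow> 'a \<Rightarrow> real"
    and M_C \<alpha> :: real
    and lam :: "nat \<Rightarrow> real"
    and \<phi> :: "nat \<Rightarrow> 'a \<Rightarrow> real"
    and M :: "'b measure"
    and Zs :: "nat \<Rightarrow> 'b \<Rightarrow> real"
    and Z :: "'a \<Rightarrow> 'b \<Rightarrow> real"
  assumes T_compact: "compact T"
    and T_pos: "emeasure lborel T > 0"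
    and C_sym: "\<forall>s\<in>T. \<forall>t\<in>T. C s t = C t s"
    and C_psd: "psd_kernel T C"
    and M_C_pos: "M_C > 0"
    and alpha: "0 < \<alpha>" "\<alpha> \<le> 1"
    and C_hoelder: "\<forall>t1\<in>T. \<forall>t2\<in>T. \<forall>s\<in>T. \<bar>C t1 s - C t2 s\<bar> \<le> M_C * norm (t1 - t2) powr \<alpha>"
    and lam_nonneg: "\<forall>j. lam j \<ge> 0"
    and \<phi>_cont: "\<forall>j. continuous_on T (\<phi> j)"
    and \<phi>_orthonormal: "\<forall>i j. (LINT t:T|lborel. \<phi> i t * \<phi> j t) = (if i = j then 1 else 0)"
    and eigen: "\<forall>j. \<forall>s\<in>T. (LINT t:T|lborel. C s t * \<phi> j t) = lam j * \<phi> j s"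
    and mercer: "\<forall>s\<in>T. \<forall>t\<in>T. (\<lambda>j. lam j * \<phi> j s * \<phi> j t) sums C s t"
    and M_prob: "prob_space M"
    and Zs_indep: "prob_space.indep_vars M (\<lambda>_. borel) Zs UNIV"
    and Zs_laplace: "\<forall>j. distributed M lborel (Zs j) (\<lambda>x. ennreal (laplace_density x))"
    and Z_meas: "\<forall>t\<in>T. Z t \<in> borel_measurable M"
    and Z_L2: "\<forall>t\<in>T. (\<lambda>n. \<integral>\<^sup>+ \<omega>. ennreal ((Z t \<omega> - (\<Sum>j<n. sqrt (lam j) * Zs j \<omega> * \<phi> j t))\<^sup>2) \<partial>M)
                 \<longlonglongrightarrow> 0"
  shows "\<exists>Zt :: 'a \<Rightarrow> 'b \<Rightarrow> real.
           (\<forall>\<omega>\<in>space M. continuous_on T (\<lambda>t. Zt t \<omega>)) \<and>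
           (\<forall>t\<in>T. Zt t \<in> borel_measurable M \<and>
                   measure M {\<omega>\<in>space M. Zt t \<omega> = Z t \<omega>} = 1)"
proof -
  have Tne: "T \<noteq> {}" using T_pos by auto
  have "iclp M T C lam \<phi> Zs Z M_C \<alpha>"
    by (intro iclp.intro M_prob iclp_axioms.intro)
       (use T_compact Tne C_sym M_C_pos alpha C_hoelder lam_nonneg mercer Zs_indep Zs_laplace Z_meas Z_L2 in auto)
  then interpret I: iclp M T C lam \<phi> Zs Z M_C \<alpha> .
  show ?thesis
    by (intro exI[of _ I.Zt]) (auto intro: I.Zt_cont I.Zt_meas I.Zt_prob)
qed

end
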